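(* Let $m>n>0$ be relatively prime integers. Define $f_1(m,n)=(2m-n,m)$, $f_2(m,n)=(2m+n,m)$, $f_3(m,n)=(2n+m,n)$ and $g_1(u,v)=(-v,u+2v)$, $g_2(u,v)=(v,u-2v)$, $g_3(u,v)=(u,v-2u)$. Then for each $i\in\{1,2,3\}$, except in the single case $(m,n)=(2,1)$ and $i=1$, one has $$\beta(f_i(m,n))=g_i(\beta(m,n)).$$
   Context: For relatively prime integers $a>b>0$, the Bézout coefficients $\beta(a,b)$ are defined via the Euclidean algorithm $a=q_1b+r_1$, $b=q_2r_1+r_2$, $\dots$, $r_{k-2}=q_kr_{k-1}+r_k$ with $r_{k-1}=1$, $r_k=0$ (where $r_{-1}=a$, $r_0=b$): writing $\begin{pmatrix}a\\ b\end{pmatrix}=M\begin{pmatrix}1\\0\end{pmatrix}$ with $M=\begin{pmatrix}q_1&1\\1&0\end{pmatrix}\cdots\begin{pmatrix}q_k&1\\1&0\end{pmatrix}$, $\beta(a,b)=(r,s)$ is the first row of $M^{-1}$, so $ra+sb=1$. (Note each $f_i(m,n)$ again consists of relatively prime integers with first entry larger than second, both positive.) *)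

theory Defs
  imports "HOL-Analysis.Analysis"
begin

function euclid_quots :: "int \<Rightarrow> int \<Rightarrow> int list" where
  "euclid_quots a b = (if b \<le> 0 then [] else (a div b) # euclid_quots b (a mod b))"
  by auto
termination
  by (relation "Wellfounded.measure (\<lambda>(a, b). nat b)") auto

definition qmat :: "int \<Rightarrow> int^2^2" where
  "qmat q = vector [vector [q, 1], vector [1, 0]]"

definition euclid_matrix :: "int \<Rightarrow> int \<Rightarrow> int^2^2" where
  "euclid_matrix a b = foldr (\<lambda>q N. qmat q ** N) (euclid_quots a b) (mat 1)"

definition bezout :: "int \<Rightarrow> int \<Rightarrow> int \<times> int" where
  "bezout a b = (let Mi = (THE N. euclid_matrix a b ** N = mat 1 \<and> N ** euclid_matrix a b = mat 1)
                 in (Mi $ 1 $ 1, Mi $ 1 $ 2))"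

end

theory Submission
  imports Defs
begin

definition qinv :: "int \<Rightarrow> int^2^2" where
  "qinv q = vector [vector [0, 1], vector [1, -q]]"

lemma qmat_qinv: "qmat q ** qinv q = mat 1" "qinv q ** qmat q = mat 1"
  by (simp_all add: vec_eq_iff forall_2 matrix_matrix_mult_def sum_2 mat_def qmat_def qinv_def)

lemma em_rec: "b > 0 \<Longrightarrow> euclid_matrix a b = qmat (a div b) ** euclid_matrix b (a mod b)"
  unfolding euclid_matrix_def by simp

lemma em_base: "b \<le> 0 \<Longrightarrow> euclid_matrix a b = mat 1"
  unfolding euclid_matrix_def by simp

lemma inv_exists: "\<exists>N. euclid_matrix a b ** N = mat 1 \<and> N ** euclid_matrix a b = mat 1"
proof (induction a b rule: euclid_quots.induct)
  case (1 a b)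
  show ?case
  proof (cases "b \<le> 0")
    case True then show ?thesis by (auto simp: em_base)
  next
    case False
    then obtain N where N: "euclid_matrix b (a mod b) ** N = mat 1" "N ** euclid_matrix b (a mod b) = mat 1"
      using 1 by auto
    have "euclid_matrix a b ** (N ** qinv (a div b)) = mat 1"
      using False N qmat_qinv by (simp add: em_rec matrix_mul_assoc)
      (metis matrix_mul_assoc matrix_mul_rid)
    moreover have "(N ** qinv (a div b)) ** euclid_matrix a b = mat 1"
      using False N qmat_qinv by (simp add: em_rec matrix_mul_assoc)
      (metis matrix_mul_assoc matrix_mul_rid)
    ultimately show ?thesis by blast
  qed
qed

lemma inv_the: "M ** N = mat 1 \<Longrightarrow> N ** M = mat 1 \<Longrightarrow> (THE N. M ** N = mat 1 \<and> N ** M = mat 1) = (N :: int^2^2)"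
  apply (rule the_equality)
   apply simp
  by (metis matrix_mul_assoc matrix_mul_lid matrix_mul_rid)

lemma bezout_rec: "b > 0 \<Longrightarrow> bezout a b = (snd (bezout b (a mod b)), fst (bezout b (a mod b)) - (a div b) * snd (bezout b (a mod b)))"
proof -
  assume b: "b > 0"
  obtain N where N: "euclid_matrix b (a mod b) ** N = mat 1" "N ** euclid_matrix b (a mod b) = mat 1"
    using inv_exists by blast
  have e1: "(THE N. euclid_matrix b (a mod b) ** N = mat 1 \<and> N ** euclid_matrix b (a mod b) = mat 1) = N"
    using inv_the N by blast
  have "euclid_matrix a b ** (N ** qinv (a div b)) = mat 1"
    using b N qmat_qinv by (simp add: em_rec matrix_mul_assoc) (metis matrix_mul_assoc matrix_mul_rid)
  moreover have "(N ** qinv (a div b)) ** euclid_matrix a b = mat 1"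
    using b N qmat_qinv by (simp add: em_rec matrix_mul_assoc) (metis matrix_mul_assoc matrix_mul_rid)
  ultimately have e2: "(THE N. euclid_matrix a b ** N = mat 1 \<and> N ** euclid_matrix a b = mat 1) = N ** qinv (a div b)"
    using inv_the by blast
  show ?thesis unfolding bezout_def Let_def e1 e2
    by (simp add: matrix_matrix_mult_def sum_2 qinv_def)
qed

lemma part1:
  fixes m n :: int
  assumes "m > n" "n > 0" "coprime m n" "\<not> (m = 2 \<and> n = 1)"
  shows "bezout m (m - n) = (fst (bezout m n) + snd (bezout m n), - snd (bezout m n))"
proof (cases "m < 2*n")
  case True
  have d1: "m div n = 1" "m mod n = m - n"
    using int_div_pos_eq[of m n 1 "m-n"] int_mod_pos_eq[of m n 1 "m-n"] True assms by auto
  have d2: "m div (m-n) = n div (m-n) + 1" "m mod (m-n) = n mod (m-n)"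
  proof -
    have "(n + (m - n)) div (m-n) = n div (m-n) + 1" by (rule div_add_self2) (use assms in simp)
    moreover have "(n + (m - n)) mod (m-n) = n mod (m-n)" by (rule mod_add_self2)
    ultimately show "m div (m-n) = n div (m-n) + 1" "m mod (m-n) = n mod (m-n)" by simp_all
  qed
  have A: "bezout m n = (snd (bezout n (m - n)), fst (bezout n (m - n)) - snd (bezout n (m - n)))"
    using bezout_rec[of n m, OF assms(2)] unfolding d1 by simp
  have B: "bezout m (m - n) = (snd (bezout (m-n) (n mod (m-n))), fst (bezout (m-n) (n mod (m-n))) - (n div (m-n) + 1) * snd (bezout (m-n) (n mod (m-n))))"
    using bezout_rec[of "m-n" m] assms(1) unfolding d2 by simp
  have C: "bezout n (m - n) = (snd (bezout (m-n) (n mod (m-n))), fst (bezout (m-n) (n mod (m-n))) - (n div (m-n)) * snd (bezout (m-n) (n mod (m-n))))"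
    using bezout_rec[of "m-n" n] assms(1) by simp
  show ?thesis using A B C by (simp add: algebra_simps)
next
  case False
  have "m \<noteq> 2 * n"
  proof
    assume h: "m = 2*n"
    then have "n dvd m" by simp
    then have "is_unit n" using assms(3) coprime_common_divisor[of m n n] by simp
    then have "n \<le> 1" using zdvd_imp_le[of n 1] by simp
    then have "n = 1" using assms(2) by simp
    then show False using h assms(4) by simp
  qed
  with False have mg: "m > 2*n" by simp
  have d2: "m div (m-n) = 1" "m mod (m-n) = n"
    using int_div_pos_eq[of m "m-n" 1 n] int_mod_pos_eq[of m "m-n" 1 n] mg assms by auto
  have d3: "m div n = (m-n) div n + 1" "m mod n = (m-n) mod n"
  proof -
    have "(m - n + n) div n = (m-n) div n + 1" by (rule div_add_self2) (use assms in simp)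
    moreover have "(m - n + n) mod n = (m-n) mod n" by (rule mod_add_self2)
    ultimately show "m div n = (m-n) div n + 1" "m mod n = (m-n) mod n" by simp_all
  qed
  have A: "bezout m (m - n) = (snd (bezout (m-n) n), fst (bezout (m-n) n) - snd (bezout (m-n) n))"
    using bezout_rec[of "m-n" m] assms(1) unfolding d2 by simp
  have B: "bezout m n = (snd (bezout n ((m-n) mod n)), fst (bezout n ((m-n) mod n)) - ((m-n) div n + 1) * snd (bezout n ((m-n) mod n)))"
    using bezout_rec[of n m, OF assms(2)] unfolding d3 .
  have C: "bezout (m-n) n = (snd (bezout n ((m-n) mod n)), fst (bezout n ((m-n) mod n)) - ((m-n) div n) * snd (bezout n ((m-n) mod n)))"
    using bezout_rec[of n "m-n", OF assms(2)] .
  show ?thesis using A B C by (simp add: algebra_simps)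
qed

theorem theorem1p5:
  fixes m n :: int
  assumes "m > n" and "n > 0" and "coprime m n"
  shows "(\<not> (m = 2 \<and> n = 1) \<longrightarrow>
           bezout (2*m - n) m = (- snd (bezout m n), fst (bezout m n) + 2 * snd (bezout m n)))
       \<and> bezout (2*m + n) m = (snd (bezout m n), fst (bezout m n) - 2 * snd (bezout m n))
       \<and> bezout (2*n + m) n = (fst (bezout m n), snd (bezout m n) - 2 * fst (bezout m n))"
proof (intro conjI impI)
  assume ex: "\<not> (m = 2 \<and> n = 1)"
  have d: "(2*m - n) div m = 1" "(2*m - n) mod m = m - n"
    using int_div_pos_eq[of "2*m-n" m 1 "m-n"] int_mod_pos_eq[of "2*m-n" m 1 "m-n"] assms by auto
  show "bezout (2*m - n) m = (- snd (bezout m n), fst (bezout m n) + 2 * snd (bezout m n))"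
    using bezout_rec[of m "2*m-n"] d part1[OF assms ex] assms by simp
next
  have d: "(2*m + n) div m = 2" "(2*m + n) mod m = n"
    using int_div_pos_eq[of "2*m+n" m 2 n] int_mod_pos_eq[of "2*m+n" m 2 n] assms by auto
  show "bezout (2*m + n) m = (snd (bezout m n), fst (bezout m n) - 2 * snd (bezout m n))"
    using bezout_rec[of m "2*m+n"] d assms by simp
next
  have d: "(2*n + m) div n = m div n + 2" "(2*n + m) mod n = m mod n" using assms
    by simp_all
  show "bezout (2*n + m) n = (fst (bezout m n), snd (bezout m n) - 2 * fst (bezout m n))"
    using bezout_rec[of n "2*n+m"] bezout_rec[of n m] d assms by (simp add: algebra_simps)
qed

end
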